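(* Let $a,b\ge0$ be integers, $c\in\mathbb Z$ and $t\ge0$ an integer. (1) If $a+b\ge1$, then $F(a,b,c,t)=F(b,a,-c,t)$. (2) If $b\ge1$, then $F(a,b,c,t)=F(a+1,b-1,c+t,t)$. (3) If $a+b\ge1$, then $F(a+1,b,0,t)=\sum_{i=0}^tF(a,b,-i,t)$.
   Context: For integers $a,b\ge0$ with $a+b\ge1$, $c\in\mathbb Z$ and $t\ge0$, $$F(a,b,c,t)=\sum_{j=0}^{a+b}(-1)^j\binom{a+b}{j}\binom{(t+1)(b-j)+a+c-1}{a+b-1},$$ with the conventions $\binom00=1$ and $\binom NK=0$ whenever $K<0$ or $N<K$ (for any integers $N,K$). *)

theory Defs
  imports Main
begin

definition ibinom :: "int \<Rightarrow> int \<Rightarrow> int" where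
  "ibinom N K = (if K < 0 \<or> N < K then 0 else int (nat N choose nat K))"

definition F :: "nat \<Rightarrow> nat \<Rightarrow> int \<Rightarrow> nat \<Rightarrow> int" where
  "F a b c t = (\<Sum>j = 0..a+b. (-1) ^ j * int ((a+b) choose j) *
      ibinom ((int t + 1) * (int b - int j) + int a + c - 1) (int a + int b - 1))"

end

theory Submission
  imports Defs
begin

definition H :: "nat \<Rightarrow> nat \<Rightarrow> int \<Rightarrow> int" where
  "H t n N = (\<Sum>j = 0..n. (-1) ^ j * int (n choose j) *
      ibinom (N - (int t + 1) * int j + int n - 1) (int n - 1))"

fun G :: "nat \<Rightarrow> nat \<Rightarrow> int \<Rightarrow> int" where
  "G t 0 N = (if N = 0 then 1 else 0)"
| "G t (Suc n) N = (\<Sum>i = 0..t. G t n (N - int i))"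

lemma F_H: "F a b c t = H t (a+b) (int t * int b + c)"
  unfolding F_def H_def
  by (rule sum.cong) (simp_all add: algebra_simps)

lemma pascal: "ibinom (X + 1) (int k + 1) = ibinom X (int k + 1) + ibinom X (int k)"
proof (cases "X < 0")
  case True then show ?thesis by (simp add: ibinom_def)
next
  case False
  then obtain m where m: "X = int m" by (metis nonneg_int_cases not_less)
  have e1: "nat (int m + 1) = Suc m" by simp
  have e2: "nat (int k + 1) = Suc k" by simp
  show ?thesis unfolding m ibinom_def e1 e2 by auto
qed

lemma hockey: "(\<Sum>i = 0..t. ibinom (M - int i + int k) (int k))
   = ibinom (M + int k + 1) (int k + 1) - ibinom (M - int t + int k) (int k + 1)"
proof (induction t)
  case 0
  show ?case using pascal[of "M + int k" k] by simp
next
  case (Suc t)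
  have p: "ibinom (M - int t + int k) (int k + 1) = ibinom (M - int (Suc t) + int k) (int k + 1)
      + ibinom (M - int (Suc t) + int k) (int k)"
    using pascal[of "M - int (Suc t) + int k" k] by (simp add: algebra_simps)
  show ?case using Suc p by simp
qed

lemma alt: "(\<Sum>j = 0..Suc n. (-1)^j * int (Suc n choose j) * (f j :: int))
  = (\<Sum>j = 0..n. (-1)^j * int (n choose j) * (f j - f (Suc j)))"
proof -
  have A: "(\<Sum>j = 0..Suc n. (-1)^j * int (Suc n choose j) * f j)
    = f 0 + (\<Sum>j = 0..n. (-1)^(Suc j) * int (n choose j) * f (Suc j))
          + (\<Sum>j = 0..n. (-1)^(Suc j) * int (n choose Suc j) * f (Suc j))"
    apply (simp add: sum.atLeast0_atMost_Suc_shift del: sum.cl_ivl_Suc)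
    apply (simp add: sum.distrib[symmetric] sum_negf[symmetric] ring_distribs)
    done
  have B: "(\<Sum>j = 0..n. (-1)^j * int (n choose j) * f j)
     = (\<Sum>j = 0..Suc n. (-1)^j * int (n choose j) * f j)" by simp
  also have "\<dots> = f 0 + (\<Sum>j = 0..n. (-1)^(Suc j) * int (n choose Suc j) * f (Suc j))"
    by (simp add: sum.atLeast0_atMost_Suc_shift del: sum.cl_ivl_Suc)
  finally have B': "(\<Sum>j = 0..n. (-1)^j * int (n choose j) * f j) =
      f 0 + (\<Sum>j = 0..n. (-1)^(Suc j) * int (n choose Suc j) * f (Suc j))" .
  have C: "(\<Sum>j = 0..n. (-1)^j * int (n choose j) * (f j - f (Suc j)))
     = (\<Sum>j = 0..n. (-1)^j * int (n choose j) * f j)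
       + (\<Sum>j = 0..n. (-1)^(Suc j) * int (n choose j) * f (Suc j))"
    by (simp add: algebra_simps sum.distrib sum_subtractf sum_negf)
  show ?thesis using A B' C by simp
qed


lemma H_rec: "H t (Suc (Suc k)) N = (\<Sum>i = 0..t. H t (Suc k) (N - int i))"
proof -
  define f where "f j = ibinom (N - (int t + 1) * int j + int k + 1) (int k + 1)" for j
  have L: "H t (Suc (Suc k)) N = (\<Sum>j = 0..Suc (Suc k). (-1)^j * int (Suc (Suc k) choose j) * f j)"
    unfolding H_def f_def by (rule sum.cong) (simp_all add: algebra_simps)
  have "(\<Sum>i = 0..t. H t (Suc k) (N - int i))
     = (\<Sum>i = 0..t. \<Sum>j = 0..Suc k. (-1)^j * int (Suc k choose j) *
          ibinom ((N - (int t + 1) * int j) - int i + int k) (int k))"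
    unfolding H_def by (intro sum.cong refl) (simp add: algebra_simps)
  also have "\<dots> = (\<Sum>j = 0..Suc k. (-1)^j * int (Suc k choose j) *
          (\<Sum>i = 0..t. ibinom ((N - (int t + 1) * int j) - int i + int k) (int k)))"
    by (subst sum.swap) (simp add: sum_distrib_left)
  also have "\<dots> = (\<Sum>j = 0..Suc k. (-1)^j * int (Suc k choose j) * (f j - f (Suc j)))"
    unfolding hockey f_def by (intro sum.cong refl) (simp add: algebra_simps)
  finally show ?thesis using L alt[of "Suc k" f] by simp
qed


lemma G1: "G t 1 N = (if 0 \<le> N \<and> N \<le> int t then 1 else 0)"
proof (cases "0 \<le> N \<and> N \<le> int t")
  case True
  then obtain m where m: "N = int m" "m \<le> t" by (metis nat_0_le nat_le_iff)
  have "G t 1 N = (\<Sum>i = 0..t. if i = m then 1 else 0)"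
    by (simp add: m)
  also have "\<dots> = 1" using m(2) by (simp add: sum.delta)
  finally show ?thesis using True by simp
next
  case False
  then have "G t 1 N = (\<Sum>i = 0..t. 0)"
    by simp (rule sum.neutral, auto)
  then show ?thesis using False by simp
qed

lemma H1: "H t 1 N = G t 1 N"
  unfolding G1 H_def by (simp add: ibinom_def)

lemma HG: "H t (Suc k) N = G t (Suc k) N"
proof (induction k arbitrary: N)
  case 0 show ?case using H1 by simp
next
  case (Suc k)
  show ?case unfolding H_rec Suc G.simps(2)[of t "Suc k"] by simp
qed

lemma Gsym: "G t n N = G t n (int t * int n - N)"
proof (induction n arbitrary: N)
  case 0 show ?case by simp
next
  case (Suc n)
  have "G t (Suc n) N = (\<Sum>i = 0..t. G t n (int t * int n - N + int i))"
    by (simp add: Suc[of "N - _"] algebra_simps)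
  also have "\<dots> = (\<Sum>i = 0..t. G t n (int t * int n - N + int (t + 0 - i)))"
    by (subst sum.atLeastAtMost_rev) simp
  also have "\<dots> = (\<Sum>i = 0..t. G t n (int t * int (Suc n) - N - int i))"
    by (intro sum.cong refl) (simp add: algebra_simps of_nat_diff)
  also have "\<dots> = G t (Suc n) (int t * int (Suc n) - N)" by simp
  finally show ?case .
qed

theorem lemma4p1:
  fixes a b t :: nat and c :: int
  shows "(a + b \<ge> 1 \<longrightarrow> F a b c t = F b a (- c) t)
    \<and> (b \<ge> 1 \<longrightarrow> F a b c t = F (a + 1) (b - 1) (c + int t) t)
    \<and> (a + b \<ge> 1 \<longrightarrow> F (a + 1) b 0 t = (\<Sum>i = 0..t. F a b (- int i) t))"
proof (intro conjI impI)
  assume "a + b \<ge> 1"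
  then obtain k where k: "a + b = Suc k" by (cases "a + b") auto
  have "F a b c t = G t (Suc k) (int t * int b + c)" unfolding F_H k HG ..
  also have "\<dots> = G t (Suc k) (int t * int a - c)"
    by (subst Gsym) (simp add: k[symmetric] algebra_simps)
  also have "\<dots> = F b a (- c) t" unfolding F_H using k by (simp add: add.commute HG)
  finally show "F a b c t = F b a (- c) t" .
next
  assume "b \<ge> 1"
  then show "F a b c t = F (a + 1) (b - 1) (c + int t) t"
    unfolding F_H by (simp add: of_nat_diff algebra_simps)
next
  assume "a + b \<ge> 1"
  then obtain k where k: "a + b = Suc k" by (cases "a + b") auto
  have "F (a + 1) b 0 t = G t (Suc (Suc k)) (int t * int b)"
    unfolding F_H using k HG by simp
  also have "\<dots> = (\<Sum>i = 0..t. G t (Suc k) (int t * int b - int i))" by simp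
  also have "\<dots> = (\<Sum>i = 0..t. F a b (- int i) t)"
    unfolding F_H k HG by simp
  finally show "F (a + 1) b 0 t = (\<Sum>i = 0..t. F a b (- int i) t)" .
qed

end
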